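(* Let $Q$ be a non-degenerate quadratic form of signature $(p,p)$ on a real vector space $V$, and let $\mathcal J=\{j\in\mathrm{GL}(V): j^*Q=-Q,\ j^2=\mathrm{Id}\}$. Let $X$ be a complex $\mathrm{GL}(V)$-module and $X^{\mathrm O(Q)}$ its subspace of $\mathrm O(Q)$-invariant vectors. For $j\in\mathcal J$, $j$ preserves $X^{\mathrm O(Q)}$, and one has $X^{\mathrm O(Q)}=X^{\mathrm O(Q),j}\oplus X^{\mathrm O(Q),-j}$ with $X^{\mathrm O(Q),\pm j}=\{v\in X^{\mathrm O(Q)}: jv=\pm v\}$. This decomposition is independent of the choice of $j\in\mathcal J$.
   Context: $j^*Q$ denotes the form $x\mapsto Q(jx)$. *)

theory Defs
  imports "HOL-Analysis.Analysis"
begin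

definition is_quadratic_form :: "('v::real_vector \<Rightarrow> real) \<Rightarrow> bool" where
  "is_quadratic_form Q \<longleftrightarrow>
     (\<exists>B. bilinear B \<and> (\<forall>x y. B x y = B y x) \<and> (\<forall>x. Q x = B x x))"

definition polar_form :: "('v::real_vector \<Rightarrow> real) \<Rightarrow> 'v \<Rightarrow> 'v \<Rightarrow> real" where
  "polar_form Q x y = (Q (x + y) - Q x - Q y) / 2"

definition nondegenerate_qf :: "('v::real_vector \<Rightarrow> real) \<Rightarrow> bool" where
  "nondegenerate_qf Q \<longleftrightarrow> (\<forall>x. (\<forall>y. polar_form Q x y = 0) \<longrightarrow> x = 0)"

definition has_signature :: "('v::euclidean_space \<Rightarrow> real) \<Rightarrow> nat \<Rightarrow> nat \<Rightarrow> bool" where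
  "has_signature Q p q \<longleftrightarrow>
     (\<exists>e :: nat \<Rightarrow> 'v.
        inj_on e {..<p+q} \<and> independent (e ` {..<p+q}) \<and> span (e ` {..<p+q}) = UNIV \<and>
        (\<forall>c. Q (\<Sum>i<p+q. c i *\<^sub>R e i) = (\<Sum>i<p. (c i)\<^sup>2) - (\<Sum>i\<in>{p..<p+q}. (c i)\<^sup>2)))"

definition GLV :: "('v::real_vector \<Rightarrow> 'v) set" where
  "GLV = {g. linear g \<and> bij g}"

definition orth_group :: "('v::real_vector \<Rightarrow> real) \<Rightarrow> ('v \<Rightarrow> 'v) set" where
  "orth_group Q = {g \<in> GLV. \<forall>x. Q (g x) = Q x}"

definition J_set :: "('v::real_vector \<Rightarrow> real) \<Rightarrow> ('v \<Rightarrow> 'v) set" where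
  "J_set Q = {j \<in> GLV. (\<forall>x. Q (j x) = - Q x) \<and> j \<circ> j = id}"

definition is_complex_GL_module ::
  "(complex \<Rightarrow> 'x::ab_group_add \<Rightarrow> 'x) \<Rightarrow> (('v::real_vector \<Rightarrow> 'v) \<Rightarrow> 'x \<Rightarrow> 'x) \<Rightarrow> bool" where
  "is_complex_GL_module sc \<rho> \<longleftrightarrow>
     vector_space sc \<and>
     (\<forall>g\<in>GLV. Vector_Spaces.linear sc sc (\<rho> g)) \<and>
     (\<forall>g\<in>GLV. \<forall>h\<in>GLV. \<rho> (g \<circ> h) = \<rho> g \<circ> \<rho> h) \<and>
     \<rho> id = id"

definition invariants :: "(('v \<Rightarrow> 'v) \<Rightarrow> 'x \<Rightarrow> 'x) \<Rightarrow> ('v \<Rightarrow> 'v) set \<Rightarrow> 'x set" where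
  "invariants \<rho> G = {v. \<forall>g\<in>G. \<rho> g v = v}"

definition inv_plus :: "(('v \<Rightarrow> 'v) \<Rightarrow> 'x \<Rightarrow> 'x) \<Rightarrow> ('v \<Rightarrow> 'v) set \<Rightarrow> ('v \<Rightarrow> 'v) \<Rightarrow> 'x set" where
  "inv_plus \<rho> G j = {v \<in> invariants \<rho> G. \<rho> j v = v}"

definition inv_minus :: "(('v \<Rightarrow> 'v) \<Rightarrow> 'x::uminus \<Rightarrow> 'x) \<Rightarrow> ('v \<Rightarrow> 'v) set \<Rightarrow> ('v \<Rightarrow> 'v) \<Rightarrow> 'x set" where
  "inv_minus \<rho> G j = {v \<in> invariants \<rho> G. \<rho> j v = - v}"

end

theory Submission
  imports Defs
begin

lemma GLV_comp: "g \<in> GLV \<Longrightarrow> h \<in> GLV \<Longrightarrow> g \<circ> h \<in> GLV"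
  unfolding GLV_def by (auto intro: linear_compose bij_comp)

lemma lin_facts:
  assumes "Vector_Spaces.linear sc sc f"
  shows "f (x + y) = f x + f y" "f (sc c x) = sc c (f x)" "f (x - y) = f x - f y" "f (- x) = - f x"
proof -
  interpret Vector_Spaces.linear sc sc f by fact
  show "f (x + y) = f x + f y" "f (sc c x) = sc c (f x)" "f (x - y) = f x - f y" "f (- x) = - f x"
    by (simp_all add: add scale diff neg)
qed

theorem mainTheorem8:
  fixes Q :: "'v::euclidean_space \<Rightarrow> real"
    and p :: nat
    and sc :: "complex \<Rightarrow> 'x::ab_group_add \<Rightarrow> 'x"
    and \<rho> :: "('v \<Rightarrow> 'v) \<Rightarrow> 'x \<Rightarrow> 'x"
  assumes "is_quadratic_form Q"
    and "nondegenerate_qf Q"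
    and "has_signature Q p p"
    and "is_complex_GL_module sc \<rho>"
  shows "(\<forall>j\<in>J_set Q.
            (\<forall>v\<in>invariants \<rho> (orth_group Q). \<rho> j v \<in> invariants \<rho> (orth_group Q)) \<and>
            (\<forall>v\<in>invariants \<rho> (orth_group Q).
               \<exists>!(a, b). a \<in> inv_plus \<rho> (orth_group Q) j \<and>
                         b \<in> inv_minus \<rho> (orth_group Q) j \<and> v = a + b)) \<and>
         (\<forall>j\<in>J_set Q. \<forall>j'\<in>J_set Q.
            inv_plus \<rho> (orth_group Q) j = inv_plus \<rho> (orth_group Q) j' \<and>
            inv_minus \<rho> (orth_group Q) j = inv_minus \<rho> (orth_group Q) j')"
proof -
  let ?O = "orth_group Q"
  let ?I = "invariants \<rho> ?O"
  have vs: "vector_space sc" and lin: "\<And>g. g \<in> GLV \<Longrightarrow> Vector_Spaces.linear sc sc (\<rho> g)"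
    and mult: "\<And>g h. g \<in> GLV \<Longrightarrow> h \<in> GLV \<Longrightarrow> \<rho> (g \<circ> h) = \<rho> g \<circ> \<rho> h"
    and rid: "\<rho> id = id"
    using assms(4) unfolding is_complex_GL_module_def by auto
  interpret vector_space sc by (rule vs)
  have OG: "g \<in> ?O \<Longrightarrow> g \<in> GLV" for g unfolding orth_group_def by auto
  have JG: "j \<in> J_set Q \<Longrightarrow> j \<in> GLV" for j unfolding J_set_def by auto
  have invol: "\<rho> j (\<rho> j v) = v" if "j \<in> J_set Q" for j v
  proof -
    have "j \<circ> j = id" using that unfolding J_set_def by auto
    hence "\<rho> (j \<circ> j) = id" using rid by simp
    thus ?thesis using mult[OF JG[OF that] JG[OF that]] by (metis comp_apply id_apply)
  qed
  have conj: "j \<circ> g \<circ> j \<in> ?O" if "j \<in> J_set Q" "g \<in> ?O" for j g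
  proof -
    have "j \<circ> g \<circ> j \<in> GLV" using GLV_comp JG[OF that(1)] OG[OF that(2)] by blast
    moreover have "Q ((j \<circ> g \<circ> j) x) = Q x" for x
      using that unfolding J_set_def orth_group_def by auto
    ultimately show ?thesis unfolding orth_group_def by auto
  qed
  have prod: "j' \<circ> j \<in> ?O" if "j \<in> J_set Q" "j' \<in> J_set Q" for j j'
  proof -
    have "j' \<circ> j \<in> GLV" using GLV_comp JG that by blast
    moreover have "Q ((j' \<circ> j) x) = Q x" for x
      using that unfolding J_set_def by auto
    ultimately show ?thesis unfolding orth_group_def by auto
  qed
  have pres: "\<rho> j v \<in> ?I" if j: "j \<in> J_set Q" and v: "v \<in> ?I" for j v
    unfolding invariants_def mem_Collect_eq
  proof
    fix g assume g: "g \<in> ?O"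
    have "\<rho> (j \<circ> g \<circ> j) v = v" using conj[OF j g] v unfolding invariants_def by auto
    hence "\<rho> j (\<rho> g (\<rho> j v)) = v"
      using mult GLV_comp JG[OF j] OG[OF g] by (metis comp_apply)
    hence "\<rho> j (\<rho> j (\<rho> g (\<rho> j v))) = \<rho> j v" by simp
    thus "\<rho> g (\<rho> j v) = \<rho> j v" using invol[OF j] by (metis invol[OF j])
  qed
  have comb: "sc c (v + s) \<in> ?I" "sc c (v - s) \<in> ?I" if "v \<in> ?I" "s \<in> ?I" for v s c
    using that lin[OF OG] unfolding invariants_def by (auto simp: lin_facts[OF lin[OF OG]])
  have half: "sc (1/2) (x + x) = x" for x
  proof -
    have "x + x = sc 2 x" using scale_left_distrib[of 1 1 x] by simp
    thus ?thesis by simp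
  qed
  have part1: "\<exists>!(a, b). a \<in> inv_plus \<rho> ?O j \<and> b \<in> inv_minus \<rho> ?O j \<and> v = a + b"
    if j: "j \<in> J_set Q" and v: "v \<in> ?I" for j v
  proof -
    note L = lin_facts[OF lin[OF JG[OF j]]]
    define a where "a = sc (1/2) (v + \<rho> j v)"
    define b where "b = sc (1/2) (v - \<rho> j v)"
    have aI: "a \<in> inv_plus \<rho> ?O j"
      unfolding inv_plus_def a_def using comb pres[OF j v] v by (simp add: L invol[OF j] add.commute)
    have "\<rho> j b = - b" unfolding b_def by (simp add: L invol[OF j] scale_right_diff_distrib)
    hence bI: "b \<in> inv_minus \<rho> ?O j"
      unfolding inv_minus_def b_def using comb pres[OF j v] v b_def by simp
    have sum: "v = a + b" unfolding a_def b_def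
      by (simp add: scale_right_distrib[symmetric] half)
    show ?thesis
    proof (rule ex1I[of _ "(a, b)"])
      show "case (a, b) of (a, b) \<Rightarrow> a \<in> inv_plus \<rho> ?O j \<and> b \<in> inv_minus \<rho> ?O j \<and> v = a + b"
        using aI bI sum by simp
    next
      fix y assume "case y of (a, b) \<Rightarrow> a \<in> inv_plus \<rho> ?O j \<and> b \<in> inv_minus \<rho> ?O j \<and> v = a + b"
      then obtain a' b' where y: "y = (a', b')" and a': "a' \<in> inv_plus \<rho> ?O j"
        and b': "b' \<in> inv_minus \<rho> ?O j" and s': "v = a' + b'" by auto
      have e: "a - a' = b' - b" using sum s' by (simp add: algebra_simps)
      have "\<rho> j (a - a') = a - a'" using aI a' unfolding inv_plus_def by (simp add: L)
      moreover have "\<rho> j (b' - b) = - (b' - b)" using bI b' unfolding inv_minus_def by (simp add: L)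
      ultimately have "a - a' = - (a - a')" using e by simp
      hence "(a - a') + (a - a') = (a - a') + - (a - a')" by (rule arg_cong)
      also have "\<dots> = 0" by (rule add.right_inverse)
      finally have "(a - a') + (a - a') = 0" .
      hence "a - a' = 0" using half[of "a - a'"] by simp
      hence "a' = a" "b' = b" using e by auto
      thus "y = (a, b)" using y by simp
    qed
  qed
  have same: "\<rho> j v = \<rho> j' v" if j: "j \<in> J_set Q" and j': "j' \<in> J_set Q" and v: "v \<in> ?I" for j j' v
  proof -
    have "\<rho> (j' \<circ> j) v = v" using prod[OF j j'] v unfolding invariants_def by auto
    hence "\<rho> j' (\<rho> j v) = v" using mult JG j j' by (metis comp_apply)
    hence "\<rho> j' (\<rho> j' (\<rho> j v)) = \<rho> j' v" by simp
    thus ?thesis using invol[OF j'] by metis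
  qed
  have eqs: "inv_plus \<rho> ?O j = inv_plus \<rho> ?O j' \<and> inv_minus \<rho> ?O j = inv_minus \<rho> ?O j'"
    if j: "j \<in> J_set Q" and j': "j' \<in> J_set Q" for j j'
    unfolding inv_plus_def inv_minus_def using same[OF j j'] by auto
  show ?thesis
    using pres part1 eqs by blast
qed

end
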